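(* For every integer $r\ge1$ there is a constant $C_r$ such that for every irreducible type $r$ random walk on a cyclic group $\mathbb{Z}/n\mathbb{Z}$ with transition matrix $A$, \[(1-|\lambda_m|)\,t_A(\tfrac12)\le C_r,\] where $|\lambda_m|=\max_{k\neq 0}|\lambda_k|$ is the largest absolute value of a nontrivial eigenvalue of $A$.
   Context: A type $r$ random walk on $\mathbb{Z}/n\mathbb{Z}$: $n\ge\pi^r$, and from $x$ the walk moves to $x+s$ with $s$ chosen uniformly among the $2r+1$ steps $\pm a_1,\dots,\pm a_r,0$ for some $a_1,\dots,a_r\in\mathbb{Z}/n\mathbb{Z}$. $A$ is its transition matrix with eigenvalues $\lambda_0=1,\lambda_1,\dots,\lambda_{n-1}$. With ${\bf v}_0=\frac1n{\bf 1}$ and ${\bf x}_0=(1,0,\dots,0)$, $d_A(t)=|A^t{\bf x}_0-{\bf v}_0|_1$ and $t_A(d)=\max\{t: d_A(t)\ge d\}$. *)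

theory Defs
  imports Complex_Main
begin

text \<open>Elements of Z/nZ are represented by the naturals 0..<n.  A type r random walk is
given by n and generators a 0, ..., a (r-1) (integers, read modulo n).  The
2r+1 steps are the list 0, a 0, -a 0, ..., a (r-1), -a (r-1), each chosen with
probability 1/(2r+1) (steps counted with multiplicity).
rw_matrix n r a y x is the probability of moving from x to y (column-stochastic,
so that A acts on column distribution vectors; the matrix is symmetric anyway).\<close>

definition rw_matrix :: "nat \<Rightarrow> nat \<Rightarrow> (nat \<Rightarrow> int) \<Rightarrow> nat \<Rightarrow> nat \<Rightarrow> real" where
  "rw_matrix n r a y x =
     (of_bool (int x mod int n = int y)
      + (\<Sum>i<r. of_bool ((int x + a i) mod int n = int y)
               + of_bool ((int x - a i) mod int n = int y)))
     / real (2 * r + 1)"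

fun mat_pow :: "nat \<Rightarrow> (nat \<Rightarrow> nat \<Rightarrow> real) \<Rightarrow> nat \<Rightarrow> nat \<Rightarrow> nat \<Rightarrow> real" where
  "mat_pow n A 0 = (\<lambda>y x. of_bool (y = x))"
| "mat_pow n A (Suc t) = (\<lambda>y x. \<Sum>z<n. A y z * mat_pow n A t z x)"

definition rw_irreducible :: "nat \<Rightarrow> nat \<Rightarrow> (nat \<Rightarrow> int) \<Rightarrow> bool" where
  "rw_irreducible n r a \<longleftrightarrow>
     (\<forall>x<n. \<forall>y<n. \<exists>t. mat_pow n (rw_matrix n r a) t y x > 0)"

definition is_eigenvalue :: "nat \<Rightarrow> (nat \<Rightarrow> nat \<Rightarrow> real) \<Rightarrow> complex \<Rightarrow> bool" where
  "is_eigenvalue n A \<mu> \<longleftrightarrow>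
     (\<exists>v :: nat \<Rightarrow> complex. (\<exists>i<n. v i \<noteq> 0) \<and>
        (\<forall>y<n. (\<Sum>x<n. complex_of_real (A y x) * v x) = \<mu> * v y))"

definition rw_dist :: "nat \<Rightarrow> nat \<Rightarrow> (nat \<Rightarrow> int) \<Rightarrow> nat \<Rightarrow> real" where
  "rw_dist n r a t = (\<Sum>y<n. \<bar>mat_pow n (rw_matrix n r a) t y 0 - 1 / real n\<bar>)"

definition rw_mixing :: "nat \<Rightarrow> nat \<Rightarrow> (nat \<Rightarrow> int) \<Rightarrow> real \<Rightarrow> nat" where
  "rw_mixing n r a d = Max {t. rw_dist n r a t \<ge> d}"

text \<open>For an irreducible walk the eigenvalue 1 is
simple, so the nontrivial eigenvalues are exactly the eigenvalues other than 1
(n \<ge> pi^r > 3 so this set is nonempty).\<close>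
definition rw_lambda_m :: "nat \<Rightarrow> nat \<Rightarrow> (nat \<Rightarrow> int) \<Rightarrow> real" where
  "rw_lambda_m n r a = Max {cmod \<mu> | \<mu>. is_eigenvalue n (rw_matrix n r a) \<mu> \<and> \<mu> \<noteq> 1}"

end

theory Submission
  imports Defs "HOL-Library.FuncSet"
begin



definition E :: "nat \<Rightarrow> nat \<Rightarrow> int \<Rightarrow> complex" where
  "E n k z = cis (2*pi*real k*of_int z/real n)"

lemma E_add: "E n k (z + w) = E n k z * E n k w"
  unfolding E_def by (simp add: cis_mult add_divide_distrib distrib_left)

lemma E_int_mult: assumes "n > 0" shows "E n k (int n * q) = 1"
proof -
  have "2*pi*real k*of_int (int n * q)/real n = 2*pi*of_int (int k * q)"
    using assms by (simp add: field_simps)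
  then show ?thesis unfolding E_def by (simp add: Ints_of_int)
qed

lemma E_mod: assumes "n > 0" shows "E n k (z mod int n) = E n k z"
proof -
  have "z = z mod int n + int n * (z div int n)" by simp
  then have "E n k z = E n k (z mod int n) * E n k (int n * (z div int n))"
    by (metis E_add)
  with E_int_mult[OF assms] show ?thesis by simp
qed

lemma mod_iff_row: assumes "n > 0" "x < n"
  shows "((int x + s) mod int n = int y) \<longleftrightarrow> (y < n \<and> x = nat ((int y - s) mod int n))"
proof
  assume h: "(int x + s) mod int n = int y"
  then have "y < n" using assms by (metis of_nat_less_iff pos_mod_bound of_nat_0_less_iff)
  moreover have "(int y - s) mod int n = int x"
    using h assms by (metis add_diff_cancel_right' mod_diff_left_eq mod_pos_pos_trivial of_nat_0_le_iff of_nat_less_iff)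
  ultimately show "y < n \<and> x = nat ((int y - s) mod int n)" by simp
next
  assume h: "y < n \<and> x = nat ((int y - s) mod int n)"
  then have "int x = (int y - s) mod int n" using assms by simp
  then have "(int x + s) mod int n = (int y - s + s) mod int n" by (metis mod_add_left_eq)
  then show "(int x + s) mod int n = int y" using h by simp
qed

lemma G_row: assumes "n > 0" "y < n"
  shows "(\<Sum>x<n. of_bool ((int x + s) mod int n = int y) * E n k (int x)) = E n k (int y - s)"
proof -
  have "(\<Sum>x<n. of_bool ((int x + s) mod int n = int y) * E n k (int x))
      = (\<Sum>x<n. if x = nat ((int y - s) mod int n) then E n k (int x) else 0)"
    by (rule sum.cong) (use mod_iff_row[OF assms(1)] assms(2) in auto)
  also have "\<dots> = E n k (int (nat ((int y - s) mod int n)))"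
    using assms by (simp add: nat_less_iff)
  also have "\<dots> = E n k (int y - s)" using assms by (simp add: E_mod)
  finally show ?thesis .
qed

lemma G_col: assumes "n > 0"
  shows "(\<Sum>y<n. of_bool ((int x + s) mod int n = int y) * E n k (int y)) = E n k (int x + s)"
proof -
  have "(\<Sum>y<n. of_bool ((int x + s) mod int n = int y) * E n k (int y))
      = (\<Sum>y<n. if y = nat ((int x + s) mod int n) then E n k (int y) else 0)"
    by (rule sum.cong) auto
  also have "\<dots> = E n k (int (nat ((int x + s) mod int n)))"
    using assms by (simp add: nat_less_iff)
  also have "\<dots> = E n k (int x + s)" using assms by (simp add: E_mod)
  finally show ?thesis .
qed


definition lam :: "nat \<Rightarrow> nat \<Rightarrow> (nat \<Rightarrow> int) \<Rightarrow> nat \<Rightarrow> real" where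
  "lam n r a k = (1 + (\<Sum>i<r. 2*cos(2*pi*real k*of_int(a i)/real n)))/real(2*r+1)"

lemma E_pair: "E n k (z - s) + E n k (z + s) = E n k z * complex_of_real (2*cos(2*pi*real k*of_int s/real n))"
proof -
  have "E n k (z - s) + E n k (z + s) = E n k z * (E n k (-s) + E n k s)"
    using E_add[of n k z "-s"] E_add[of n k z s] by (simp add: distrib_left)
  moreover have "E n k (-s) + E n k s = complex_of_real (2*cos(2*pi*real k*of_int s/real n))"
    unfolding E_def by (simp add: complex_eq_iff)
  ultimately show ?thesis by simp
qed

lemma ofr_bool: "complex_of_real (of_bool P) = of_bool P" by simp

lemma rw_complex: "complex_of_real (rw_matrix n r a y x) =
   (of_bool (int x mod int n = int y) + (\<Sum>i<r. of_bool ((int x + a i) mod int n = int y)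
               + of_bool ((int x - a i) mod int n = int y))) / of_nat (2*r+1)"
  unfolding rw_matrix_def of_real_divide of_real_add of_real_sum ofr_bool by simp

lemma sum_rearr:
  fixes B0 :: "nat \<Rightarrow> complex"
  shows "(\<Sum>x<n. (B0 x + (\<Sum>i<r. B1 i x + B2 i x)) / D * F x)
   = ((\<Sum>x<n. B0 x * F x) + (\<Sum>i<r. (\<Sum>x<n. B1 i x * F x) + (\<Sum>x<n. B2 i x * F x))) / D"
proof -
  have "(\<Sum>x<n. (B0 x + (\<Sum>i<r. B1 i x + B2 i x)) / D * F x)
     = (\<Sum>x<n. B0 x * F x + (\<Sum>i<r. B1 i x * F x + B2 i x * F x)) / D"
    by (simp add: sum_divide_distrib distrib_right sum_distrib_right)
  also have "\<dots> = ((\<Sum>x<n. B0 x * F x) + (\<Sum>x<n. \<Sum>i<r. B1 i x * F x + B2 i x * F x)) / D"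
    by (simp only: sum.distrib)
  also have "\<dots> = ((\<Sum>x<n. B0 x * F x) + (\<Sum>i<r. \<Sum>x<n. B1 i x * F x + B2 i x * F x)) / D"
    by (subst sum.swap) (rule refl)
  also have "\<dots> = ((\<Sum>x<n. B0 x * F x) + (\<Sum>i<r. (\<Sum>x<n. B1 i x * F x) + (\<Sum>x<n. B2 i x * F x))) / D"
    by (simp only: sum.distrib)
  finally show ?thesis .
qed

lemma row_rel: assumes "n > 0" "y < n"
  shows "(\<Sum>x<n. complex_of_real (rw_matrix n r a y x) * E n k (int x)) = complex_of_real (lam n r a k) * E n k (int y)"
proof -
  have g0: "(\<Sum>x<n. of_bool (int x mod int n = int y) * E n k (int x)) = E n k (int y)"
    using G_row[OF assms, of 0 k] by simp
  have g1: "(\<Sum>x<n. of_bool ((int x - s) mod int n = int y) * E n k (int x)) = E n k (int y + s)" for s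
    using G_row[OF assms, of "-s" k] by simp
  have "(\<Sum>x<n. complex_of_real (rw_matrix n r a y x) * E n k (int x))
     = (E n k (int y) + (\<Sum>i<r. E n k (int y - a i) + E n k (int y + a i))) / of_nat (2*r+1)"
    unfolding rw_complex sum_rearr g0 g1 G_row[OF assms] ..
  also have "\<dots> = complex_of_real (lam n r a k) * E n k (int y)"
    unfolding E_pair lam_def by (simp add: sum_distrib_left[symmetric] field_simps)
  finally show ?thesis .
qed

lemma col_rel: assumes "n > 0"
  shows "(\<Sum>y<n. complex_of_real (rw_matrix n r a y x) * E n k (int y)) = complex_of_real (lam n r a k) * E n k (int x)"
proof -
  have g0: "(\<Sum>y<n. of_bool (int x mod int n = int y) * E n k (int y)) = E n k (int x)"
    using G_col[OF assms, of x 0 k] by simp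
  have g1: "(\<Sum>y<n. of_bool ((int x - s) mod int n = int y) * E n k (int y)) = E n k (int x - s)" for s
    using G_col[OF assms, of x "-s" k] by simp
  have "(\<Sum>y<n. complex_of_real (rw_matrix n r a y x) * E n k (int y))
     = (E n k (int x) + (\<Sum>i<r. E n k (int x + a i) + E n k (int x - a i))) / of_nat (2*r+1)"
    unfolding rw_complex sum_rearr g0 g1 G_col[OF assms] ..
  also have "\<dots> = complex_of_real (lam n r a k) * E n k (int x)"
    unfolding add.commute[of "E n k (int x + _)"] E_pair lam_def by (simp add: sum_distrib_left[symmetric] field_simps)
  finally show ?thesis .
qed


lemma orth: assumes "n > 0"
  shows "(\<Sum>k<n. E n k j) = (if int n dvd j then of_nat n else 0)"
proof -
  define q where "q = cis (2*pi*of_int j/real n)"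
  have Eq: "E n k j = q ^ k" for k unfolding q_def E_def DeMoivre by (simp add: field_simps)
  show ?thesis
  proof (cases "int n dvd j")
    case True
    then obtain m where "j = int n * m" by blast
    then show ?thesis using E_int_mult[OF assms] True by simp
  next
    case False
    have "q \<noteq> 1"
    proof
      assume "q = 1"
      then have "cos (2*pi*of_int j/real n) = 1" unfolding q_def by (metis cis.sel(1) one_complex.sel(1))
      then obtain m :: int where m: "2*pi*of_int j/real n = of_int m * 2 * pi" using cos_one_2pi_int by blast
      then have "of_int j = real n * of_int m" using assms by (simp add: field_simps)
      then have "j = int n * m" by (metis of_int_eq_iff of_int_mult of_int_of_nat_eq)
      with False show False by simp
    qed
    moreover have "q ^ n = 1"
    proof -
      have "real n * (2*pi*of_int j/real n) = 2*pi*of_int j" using assms by simp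
      then show ?thesis unfolding q_def DeMoivre using cis_multiple_2pi[of "of_int j"] by (simp add: Ints_of_int)
    qed
    ultimately show ?thesis using False by (simp add: Eq sum_gp_strict)
  qed
qed

lemma orth_nat: assumes "n > 0" "y < n"
  shows "(\<Sum>k<n. E n k (int y)) = (if y = 0 then of_nat n else 0)"
proof -
  have "int n dvd int y \<longleftrightarrow> y = 0" using assms
    by (metis dvd_0_right dvd_imp_le of_nat_dvd_iff linorder_not_le neq0_conv)
  then show ?thesis using orth[OF assms(1)] by simp
qed

lemma orth_diff: assumes "n > 0" "y < n" "x < n"
  shows "(\<Sum>k<n. E n k (int y - int x)) = (if y = x then of_nat n else 0)"
proof -
  have "int n dvd (int y - int x) \<longleftrightarrow> y = x"
  proof
    assume "int n dvd (int y - int x)"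
    then have "int y mod int n = int x mod int n" by (simp add: mod_eq_dvd_iff)
    then show "y = x" using assms by simp
  qed simp
  then show ?thesis using orth[OF assms(1)] by simp
qed

lemma mat_pow_formula: assumes "n > 0" "y < n"
  shows "complex_of_real (mat_pow n (rw_matrix n r a) t y 0)
     = (\<Sum>k<n. complex_of_real (lam n r a k) ^ t * E n k (int y)) / of_nat n"
  using assms(2)
proof (induction t arbitrary: y)
  case 0
  then show ?case using orth_nat[OF assms(1) 0] assms by simp
next
  case (Suc t)
  have "complex_of_real (mat_pow n (rw_matrix n r a) (Suc t) y 0)
     = (\<Sum>z<n. complex_of_real (rw_matrix n r a y z) * ((\<Sum>k<n. complex_of_real (lam n r a k) ^ t * E n k (int z)) / of_nat n))"
    by (simp add: Suc.IH)
  also have "\<dots> = (\<Sum>k<n. complex_of_real (lam n r a k) ^ t * (\<Sum>z<n. complex_of_real (rw_matrix n r a y z) * E n k (int z))) / of_nat n"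
  proof -
    have "(\<Sum>z<n. complex_of_real (rw_matrix n r a y z) * ((\<Sum>k<n. complex_of_real (lam n r a k) ^ t * E n k (int z)) / of_nat n))
      = (\<Sum>z<n. \<Sum>k<n. complex_of_real (rw_matrix n r a y z) * (complex_of_real (lam n r a k) ^ t * E n k (int z))) / of_nat n"
      by (simp only: sum_divide_distrib[symmetric] times_divide_eq_right sum_distrib_left)
    also have "\<dots> = (\<Sum>k<n. \<Sum>z<n. complex_of_real (rw_matrix n r a y z) * (complex_of_real (lam n r a k) ^ t * E n k (int z))) / of_nat n"
      by (subst sum.swap) (rule refl)
    also have "\<dots> = (\<Sum>k<n. complex_of_real (lam n r a k) ^ t * (\<Sum>z<n. complex_of_real (rw_matrix n r a y z) * E n k (int z))) / of_nat n"
      by (simp only: sum_distrib_left mult.left_commute)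
    finally show ?thesis .
  qed
  also have "\<dots> = (\<Sum>k<n. complex_of_real (lam n r a k) ^ Suc t * E n k (int y)) / of_nat n"
    using row_rel[OF assms(1) Suc.prems] by (simp add: mult_ac)
  finally show ?case .
qed

lemma cmod_E[simp]: "cmod (E n k z) = 1" unfolding E_def by simp

lemma lam0: "lam n r a 0 = 1" unfolding lam_def by simp

lemma E0[simp]: "E n 0 z = 1" unfolding E_def by simp

lemma dist_bound: assumes "n > 0"
  shows "rw_dist n r a t \<le> (\<Sum>k\<in>{1..<n}. \<bar>lam n r a k\<bar> ^ t)"
proof -
  have "\<bar>mat_pow n (rw_matrix n r a) t y 0 - 1 / real n\<bar> \<le> (\<Sum>k\<in>{1..<n}. \<bar>lam n r a k\<bar> ^ t) / real n"
    if y: "y < n" for y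
  proof -
    have split: "{..<n} = insert 0 {1..<n}" using assms by auto
    have "complex_of_real (mat_pow n (rw_matrix n r a) t y 0 - 1 / real n)
        = (\<Sum>k\<in>{1..<n}. complex_of_real (lam n r a k) ^ t * E n k (int y)) / of_nat n"
      using mat_pow_formula[OF assms y, of r a t] assms
      by (simp add: split lam0 add_divide_distrib)
    then have "\<bar>mat_pow n (rw_matrix n r a) t y 0 - 1 / real n\<bar>
        = cmod (\<Sum>k\<in>{1..<n}. complex_of_real (lam n r a k) ^ t * E n k (int y)) / real n"
      by (metis norm_divide norm_of_nat norm_of_real)
    also have "\<dots> \<le> (\<Sum>k\<in>{1..<n}. cmod (complex_of_real (lam n r a k) ^ t * E n k (int y))) / real n"
      by (intro divide_right_mono norm_sum) simp
    also have "\<dots> = (\<Sum>k\<in>{1..<n}. \<bar>lam n r a k\<bar> ^ t) / real n"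
      by (simp add: norm_mult norm_power)
    finally show ?thesis .
  qed
  then have "rw_dist n r a t \<le> (\<Sum>y<n. (\<Sum>k\<in>{1..<n}. \<bar>lam n r a k\<bar> ^ t) / real n)"
    unfolding rw_dist_def by (intro sum_mono) auto
  also have "\<dots> = (\<Sum>k\<in>{1..<n}. \<bar>lam n r a k\<bar> ^ t)" using assms by simp
  finally show ?thesis .
qed

lemma eig_complete: assumes "n > 0" "is_eigenvalue n (rw_matrix n r a) \<mu>"
  shows "\<exists>k<n. \<mu> = complex_of_real (lam n r a k)"
proof (rule ccontr)
  assume nk: "\<not> ?thesis"
  obtain v where v: "\<exists>i<n. v i \<noteq> 0"
    and ev: "\<And>y. y < n \<Longrightarrow> (\<Sum>x<n. complex_of_real (rw_matrix n r a y x) * v x) = \<mu> * v y"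
    using assms(2) unfolding is_eigenvalue_def by blast
  define w where "w k = (\<Sum>y<n. E n k (int y) * v y)" for k
  have w0: "w k = 0" if "k < n" for k
  proof -
    have "\<mu> * w k = (\<Sum>y<n. E n k (int y) * (\<Sum>x<n. complex_of_real (rw_matrix n r a y x) * v x))"
    proof -
      have "\<mu> * w k = (\<Sum>y<n. E n k (int y) * (\<mu> * v y))" unfolding w_def sum_distrib_left by (simp add: mult_ac)
      also have "\<dots> = (\<Sum>y<n. E n k (int y) * (\<Sum>x<n. complex_of_real (rw_matrix n r a y x) * v x))"
        by (intro sum.cong refl) (simp add: ev)
      finally show ?thesis .
    qed
    also have "\<dots> = (\<Sum>x<n. v x * (\<Sum>y<n. complex_of_real (rw_matrix n r a y x) * E n k (int y)))"
    proof -
      have "(\<Sum>y<n. E n k (int y) * (\<Sum>x<n. complex_of_real (rw_matrix n r a y x) * v x))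
        = (\<Sum>y<n. \<Sum>x<n. v x * (complex_of_real (rw_matrix n r a y x) * E n k (int y)))"
        by (simp only: sum_distrib_left mult_ac)
      also have "\<dots> = (\<Sum>x<n. \<Sum>y<n. v x * (complex_of_real (rw_matrix n r a y x) * E n k (int y)))"
        by (subst sum.swap) (rule refl)
      finally show ?thesis by (simp only: sum_distrib_left)
    qed
    also have "\<dots> = complex_of_real (lam n r a k) * w k"
      unfolding w_def col_rel[OF assms(1)] by (simp add: sum_distrib_left mult_ac)
    finally have "(\<mu> - complex_of_real (lam n r a k)) * w k = 0" by (simp add: algebra_simps)
    moreover have "\<mu> \<noteq> complex_of_real (lam n r a k)" using nk that by blast
    ultimately show ?thesis by simp
  qed
  obtain x0 where x0: "x0 < n" "v x0 \<noteq> 0" using v by blast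
  have "(\<Sum>k<n. E n k (- int x0) * w k) = (\<Sum>y<n. v y * (\<Sum>k<n. E n k (int y - int x0)))"
  proof -
    have "(\<Sum>k<n. E n k (- int x0) * w k) = (\<Sum>k<n. \<Sum>y<n. v y * E n k (int y - int x0))"
      unfolding w_def sum_distrib_left
      by (intro sum.cong refl) (simp add: E_add[symmetric] mult_ac)
    also have "\<dots> = (\<Sum>y<n. \<Sum>k<n. v y * E n k (int y - int x0))"
      by (subst sum.swap) (rule refl)
    finally show ?thesis by (simp only: sum_distrib_left)
  qed
  also have "\<dots> = (\<Sum>y<n. if y = x0 then v y * of_nat n else 0)"
    by (rule sum.cong) (simp_all add: orth_diff[OF assms(1) _ x0(1)])
  also have "\<dots> = v x0 * of_nat n" using x0 by simp
  finally have "v x0 * of_nat n = 0" using w0 by simp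
  with x0 assms(1) show False by simp
qed

lemma eig_lam: assumes "n > 0" "k < n"
  shows "is_eigenvalue n (rw_matrix n r a) (complex_of_real (lam n r a k))"
  unfolding is_eigenvalue_def
proof (intro exI[of _ "\<lambda>x. E n k (int x)"] conjI allI impI)
  show "\<exists>i<n. E n k (int i) \<noteq> 0" using assms by (intro exI[of _ 0]) (simp add: E_def)
  show "(\<Sum>x<n. complex_of_real (rw_matrix n r a y x) * E n k (int x)) = complex_of_real (lam n r a k) * E n k (int y)"
    if "y < n" for y using row_rel[OF assms(1) that] .
qed


lemma rw_nonneg: "rw_matrix n r a y x \<ge> 0"
  unfolding rw_matrix_def by (intro divide_nonneg_nonneg add_nonneg_nonneg sum_nonneg) auto

lemma dvd_step: assumes "int n dvd k * z" "int n dvd k * s"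
  shows "int n dvd k * ((z + s) mod int n)"
proof -
  have "int n dvd k * (z + s)" using assms by (simp add: distrib_left)
  then show ?thesis by (simp add: dvd_eq_mod_eq_0 mod_mult_right_eq)
qed

lemma reach_dvd: assumes "n > 0" "\<forall>i<r. int n dvd k * a i"
  shows "y < n \<Longrightarrow> mat_pow n (rw_matrix n r a) t y 0 > 0 \<Longrightarrow> int n dvd k * int y"
proof (induction t arbitrary: y)
  case 0
  then show ?case by simp
next
  case (Suc t)
  have "\<exists>z<n. rw_matrix n r a y z * mat_pow n (rw_matrix n r a) t z 0 > 0"
  proof (rule ccontr)
    assume "\<not> ?thesis"
    then have "(\<Sum>z<n. rw_matrix n r a y z * mat_pow n (rw_matrix n r a) t z 0) \<le> 0"
      by (intro sum_nonpos) (meson lessThan_iff not_less)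
    with Suc.prems show False by simp
  qed
  then obtain z where z: "z < n" "rw_matrix n r a y z * mat_pow n (rw_matrix n r a) t z 0 > 0" by blast
  have Ap: "rw_matrix n r a y z > 0" and Mp: "mat_pow n (rw_matrix n r a) t z 0 > 0"
    using z(2) rw_nonneg[of n r a y z] by (auto simp: zero_less_mult_iff)
  have IH: "int n dvd k * int z" using Suc.IH[OF z(1) Mp] .
  have "\<exists>s. int n dvd k * s \<and> (int z + s) mod int n = int y"
  proof (rule ccontr)
    assume ns0: "\<not> ?thesis"
    have ns: "\<forall>s. int n dvd k * s \<longrightarrow> (int z + s) mod int n \<noteq> int y" using ns0 by blast
    have "int z mod int n \<noteq> int y" using ns[rule_format, of 0] by auto
    moreover have "(int z + a i) mod int n \<noteq> int y" if "i < r" for i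
      using ns assms(2) that by blast
    moreover have "(int z - a i) mod int n \<noteq> int y" if "i < r" for i
      using ns[rule_format, of "- a i"] assms(2) that by auto
    ultimately have "rw_matrix n r a y z = 0" unfolding rw_matrix_def by simp
    with Ap show False by simp
  qed
  then obtain s where "int n dvd k * s" "(int z + s) mod int n = int y" by blast
  then show ?case using dvd_step[OF IH] by metis
qed

lemma irred_dvd: assumes "n \<ge> 2" "rw_irreducible n r a" "\<forall>i<r. int n dvd k * a i"
  shows "int n dvd k"
proof -
  obtain t where "mat_pow n (rw_matrix n r a) t 1 0 > 0"
    using assms(1,2) unfolding rw_irreducible_def by force
  from reach_dvd[OF _ assms(3) _ this] assms(1) show ?thesis by simp
qed

lemma cos_lb0: fixes x :: real assumes "x \<ge> 0" shows "cos x \<ge> 1 - x^2/2"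
proof -
  let ?f = "\<lambda>x. cos x - 1 + x^2/2"
  have "?f 0 \<le> ?f x"
  proof (rule DERIV_nonneg_imp_nondecreasing[OF assms])
    fix u :: real assume "0 \<le> u" "u \<le> x"
    then show "\<exists>y. DERIV ?f u :> y \<and> y \<ge> 0"
      by (intro exI[of _ "u - sin u"] conjI) (auto intro!: derivative_eq_intros simp: sin_x_le_x)
  qed
  then show ?thesis by simp
qed

lemma cos_lb: "cos (x::real) \<ge> 1 - x^2/2"
proof (cases "x \<ge> 0")
  case True then show ?thesis by (rule cos_lb0)
next
  case False then show ?thesis using cos_lb0[of "-x"] by simp
qed

lemma sin_lb: fixes x :: real assumes "x \<ge> 0" shows "sin x \<ge> x - x^3/6"
proof -
  let ?f = "\<lambda>x. sin x - x + x^3/6"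
  have "?f 0 \<le> ?f x"
  proof (rule DERIV_nonneg_imp_nondecreasing[OF assms])
    fix u :: real assume "0 \<le> u" "u \<le> x"
    then show "\<exists>y. DERIV ?f u :> y \<and> y \<ge> 0"
      using cos_lb[of u]
      by (intro exI[of _ "cos u - 1 + u^2/2"] conjI) (auto intro!: derivative_eq_intros simp: field_simps power2_eq_square)
  qed
  then show ?thesis by simp
qed

lemma one_minus_cos_upper: "1 - cos (2*pi*(u::real)) \<le> 2*pi^2*u^2"
  using cos_lb[of "2*pi*u"] by (simp add: power_mult_distrib)

lemma one_minus_cos_lower: fixes u :: real assumes "\<bar>u\<bar> \<le> 1/2" shows "1 - cos (2*pi*u) \<ge> u^2/2"
proof -
  define w where "w = pi * \<bar>u\<bar>"
  have w0: "w \<ge> 0" unfolding w_def by simp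
  have "pi * \<bar>u\<bar> \<le> 4 * (1/2)" by (rule mult_mono) (use assms pi_less_4 in auto)
  then have w2: "w \<le> 2" unfolding w_def by simp
  have "sin w \<ge> w - w^3/6" using sin_lb[OF w0] .
  moreover have "w^3/6 \<le> w * (2/3)"
  proof -
    have "w^2 \<le> 4" using w0 w2 by (metis power_mono numeral_Bit0 power2_eq_square mult_2 numeral_One one_add_one) 
    then have "w^3 \<le> 4 * w" using w0 by (simp add: power3_eq_cube power2_eq_square mult_right_mono)
    then show ?thesis by simp
  qed
  ultimately have sw: "sin w \<ge> w/3" by simp
  have "sin w ^ 2 \<ge> (w/3)^2" using sw w0 by (intro power_mono) auto
  moreover have "sin w ^ 2 = sin (pi*u) ^ 2" unfolding w_def by (cases "u \<ge> 0") auto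
  moreover have "1 - cos (2*pi*u) = 2 * sin (pi*u)^2" using cos_double_sin[of "pi*u"] by (simp add: mult_ac)
  moreover have "(w/3)^2 \<ge> u^2/4"
  proof -
    have "w \<ge> 2 * \<bar>u\<bar>" unfolding w_def using pi_ge_two by (simp add: mult_right_mono)
    then have "w^2 \<ge> (2*\<bar>u\<bar>)^2" by (intro power_mono) auto
    then have "w^2 \<ge> 4 * u^2" by (simp add: power_mult_distrib)
    moreover have "(w/3)^2 = w^2/9" by (simp add: power_divide)
    ultimately show ?thesis using zero_le_power2[of u] by linarith
  qed
  ultimately show ?thesis by linarith
qed


definition nn :: "real \<Rightarrow> real" where "nn \<theta> = \<bar>\<theta> - of_int (round \<theta>)\<bar>"
definition th :: "nat \<Rightarrow> (nat \<Rightarrow> int) \<Rightarrow> nat \<Rightarrow> nat \<Rightarrow> real" where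
  "th n a k i = real k * of_int (a i) / real n"
definition mm :: "nat \<Rightarrow> nat \<Rightarrow> (nat \<Rightarrow> int) \<Rightarrow> nat \<Rightarrow> real" where
  "mm n r a k = Max ((\<lambda>i. nn (th n a k i)) ` {..<r})"

lemma nn_nonneg: "nn \<theta> \<ge> 0" unfolding nn_def by simp
lemma nn_half: "nn \<theta> \<le> 1/2" unfolding nn_def using of_int_round_abs_le[of \<theta>] by linarith
lemma nn_min: "nn \<theta> \<le> \<bar>\<theta> - of_int m\<bar>" unfolding nn_def by (rule round_diff_minimal)

lemma cos_shift: "cos (2*pi*(\<theta> - of_int m)) = cos (2*pi*\<theta>)"
proof -
  have "2*pi*(\<theta> - of_int m) = 2*pi*\<theta> - (2*pi)*of_int m" by (simp add: algebra_simps)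
  then show ?thesis by (simp only: cos_diff cos_int_2pin sin_int_2pin)
qed

lemma omc_upper: "1 - cos (2*pi*\<theta>) \<le> 2*pi^2*nn \<theta>^2"
  using one_minus_cos_upper[of "\<theta> - of_int (round \<theta>)"] unfolding cos_shift nn_def by simp

lemma omc_lower: "1 - cos (2*pi*\<theta>) \<ge> nn \<theta>^2/2"
  using one_minus_cos_lower[of "\<theta> - of_int (round \<theta>)"] of_int_round_abs_le[of \<theta>] unfolding cos_shift nn_def
  by (simp add: abs_minus_commute)

context
  fixes n r :: nat and a :: "nat \<Rightarrow> int"
  assumes r1: "r \<ge> 1"
begin

lemma mm_ge: "i < r \<Longrightarrow> nn (th n a k i) \<le> mm n r a k"
  unfolding mm_def by (rule Max_ge) auto

lemma mm_attained: "\<exists>i<r. mm n r a k = nn (th n a k i)"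
proof -
  have "mm n r a k \<in> (\<lambda>i. nn (th n a k i)) ` {..<r}" unfolding mm_def using r1 by (intro Max_in) (auto simp: lessThan_empty_iff)
  then show ?thesis by auto
qed

lemma mm_nonneg: "mm n r a k \<ge> 0" using mm_attained nn_nonneg by metis
lemma mm_half: "mm n r a k \<le> 1/2" using mm_attained nn_half by metis

lemma one_minus_lam: "1 - lam n r a k = 2 * (\<Sum>i<r. 1 - cos (2*pi*th n a k i)) / real (2*r+1)"
proof -
  have "(\<Sum>i<r. 1 - cos (2*pi*th n a k i)) = real r - (\<Sum>i<r. cos (2*pi*real k*of_int(a i)/real n))"
    by (simp add: sum_subtractf th_def mult.assoc)
  then show ?thesis unfolding lam_def by (simp add: field_simps sum_distrib_left[symmetric])
qed

lemma lam_lower: "mm n r a k ^ 2 / real (2*r+1) \<le> 1 - \<bar>lam n r a k\<bar>"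
proof -
  define S where "S = (\<Sum>i<r. 1 - cos (2*pi*th n a k i))"
  obtain i where i: "i < r" "mm n r a k = nn (th n a k i)" using mm_attained by blast
  have "1 - cos (2*pi*th n a k i) \<le> S" unfolding S_def
    by (rule member_le_sum) (use i in auto)
  then have S1: "mm n r a k ^ 2 / 2 \<le> S" using omc_lower[of "th n a k i"] i by simp
  have S2: "S \<le> 2 * real r" unfolding S_def
    using sum_mono[of "{..<r}" "\<lambda>i. 1 - cos (2*pi*th n a k i)" "\<lambda>_. 2"] by (simp add: cos_ge_minus_one) 
  have eq: "1 - lam n r a k = 2 * S / real (2*r+1)" unfolding S_def by (rule one_minus_lam)
  have m4: "mm n r a k ^ 2 \<le> 1/4"
    using mm_half mm_nonneg power_mono[of "mm n r a k" "1/2" 2] by (simp add: power_divide)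
  show ?thesis
  proof (cases "lam n r a k \<ge> 0")
    case True
    then have "1 - \<bar>lam n r a k\<bar> = 2 * S / real (2*r+1)" using eq by simp
    moreover have "mm n r a k ^ 2 / real (2*r+1) \<le> 2 * S / real (2*r+1)"
      by (intro divide_right_mono) (use S1 in auto)
    ultimately show ?thesis by simp
  next
    case False
    then have "1 - \<bar>lam n r a k\<bar> = 2 - 2 * S / real (2*r+1)" using eq by simp
    also have "\<dots> = (2 * real (2*r+1) - 2 * S) / real (2*r+1)" by (simp add: field_simps)
    also have "\<dots> \<ge> mm n r a k ^ 2 / real (2*r+1)"
      by (intro divide_right_mono) (use S2 m4 in auto)
    finally show ?thesis .
  qed
qed

lemma lam_upper: "1 - lam n r a k \<le> 2*pi^2 * mm n r a k ^ 2"
proof -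
  have "(\<Sum>i<r. 1 - cos (2*pi*th n a k i)) \<le> (\<Sum>i<r. 2*pi^2 * mm n r a k ^ 2)"
  proof (rule sum_mono)
    fix i assume "i \<in> {..<r}"
    then have "nn (th n a k i) \<le> mm n r a k" using mm_ge by simp
    then have "nn (th n a k i)^2 \<le> mm n r a k ^ 2" using nn_nonneg by (intro power_mono) auto
    then show "1 - cos (2*pi*th n a k i) \<le> 2*pi^2 * mm n r a k ^ 2"
      using omc_upper[of "th n a k i"] by (smt (verit) mult_left_mono pi_gt_zero zero_le_power2)
  qed
  then have "1 - lam n r a k \<le> 2 * (real r * (2*pi^2 * mm n r a k ^ 2)) / real (2*r+1)"
    unfolding one_minus_lam by (intro divide_right_mono) auto
  also have "\<dots> \<le> 2*pi^2 * mm n r a k ^ 2"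
  proof -
    have "0 \<le> 2*pi^2 * mm n r a k ^ 2" by simp
    then have "2 * real r * (2*pi^2 * mm n r a k ^ 2) \<le> real (2*r+1) * (2*pi^2 * mm n r a k ^ 2)"
      by (intro mult_right_mono) auto
    then show ?thesis by (simp add: field_simps)
  qed
  finally show ?thesis .
qed

end


lemma mm_pos: assumes "r \<ge> 1" "n \<ge> 2" "rw_irreducible n r a" "1 \<le> k" "k < n"
  shows "mm n r a k > 0"
proof (rule ccontr)
  assume "\<not> ?thesis"
  then have m0: "mm n r a k \<le> 0" by simp
  have "int n dvd int k * a i" if i: "i < r" for i
  proof -
    have "nn (th n a k i) = 0" using mm_ge[OF assms(1) i, of n a k] nn_nonneg[of "th n a k i"] m0 by simp
    then have "th n a k i = of_int (round (th n a k i))" unfolding nn_def by simp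
    then have "real k * of_int (a i) = real n * of_int (round (th n a k i))"
      unfolding th_def using assms(2) by (simp add: field_simps)
    then have "int k * a i = int n * round (th n a k i)" by (metis of_int_eq_iff of_int_mult of_int_of_nat_eq)
    then show ?thesis by simp
  qed
  then have "int n dvd int k" using irred_dvd[OF assms(2,3)] by blast
  then have "n dvd k" by simp
  with assms(4,5) show False by (simp add: nat_dvd_not_less)
qed

lemma packing:
  assumes r1: "r \<ge> 1" and n0: "n > 0" and rho: "\<rho> > 0" and hmin: "\<forall>d. 1 \<le> d \<longrightarrow> d < n \<longrightarrow> \<rho> \<le> mm n r a d"
  shows "card {k. k < n \<and> mm n r a k < (real j + 1) * \<rho>} \<le> (2*j+2)^r"
proof -
  define u where "u k i = th n a k i - of_int (round (th n a k i))" for k i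
  define f where "f k = restrict (\<lambda>i. \<lfloor>u k i / \<rho>\<rfloor>) {..<r}" for k
  define K where "K = {k. k < n \<and> mm n r a k < (real j + 1) * \<rho>}"
  define P where "P = PiE {..<r} (\<lambda>_. {-(int j+1)..int j})"
  have nnu: "nn (th n a k i) = \<bar>u k i\<bar>" for k i unfolding nn_def u_def ..
  have sub: "f ` K \<subseteq> P"
  proof
    fix z assume "z \<in> f ` K"
    then obtain k where k: "k \<in> K" "z = f k" by blast
    have "\<lfloor>u k i / \<rho>\<rfloor> \<in> {-(int j+1)..int j}" if i: "i < r" for i
    proof -
      have "\<bar>u k i\<bar> < (real j + 1) * \<rho>" using mm_ge[OF r1 i, of n a k] k(1) nnu[of k i] unfolding K_def by simp
      then have "\<bar>u k i / \<rho>\<bar> < real j + 1" using rho by (simp add: field_simps abs_divide)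
      then have "- (real j + 1) \<le> u k i / \<rho>" "u k i / \<rho> < real j + 1" by linarith+
      then have "-(int j+1) \<le> \<lfloor>u k i / \<rho>\<rfloor>" "\<lfloor>u k i / \<rho>\<rfloor> \<le> int j"
        by (simp_all add: le_floor_iff floor_le_iff)
      then show ?thesis by simp
    qed
    then show "z \<in> P" unfolding P_def k(2) f_def by auto
  qed
  have inj: "inj_on f K"
  proof
    fix k k' assume kK: "k \<in> K" and k'K: "k' \<in> K" and fe: "f k = f k'"
    show "k = k'"
    proof (rule ccontr)
      assume ne: "k \<noteq> k'"
      have close: "\<bar>u k i - u k' i\<bar> < \<rho>" if i: "i < r" for i
      proof -
        have "\<lfloor>u k i / \<rho>\<rfloor> = \<lfloor>u k' i / \<rho>\<rfloor>" using fun_cong[OF fe, of i] i unfolding f_def by simp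
        then have "\<bar>u k i / \<rho> - u k' i / \<rho>\<bar> < 1" by (rule floor_eq_imp_diff_1)
        then show ?thesis using rho by (simp add: field_simps abs_divide diff_divide_distrib[symmetric])
      qed
      define q where "q = (int k - int k') div int n"
      define d where "d = nat ((int k - int k') mod int n)"
      have kn: "k < n" "k' < n" using kK k'K unfolding K_def by auto
      have dmod: "int d = (int k - int k') mod int n" using n0 unfolding d_def by simp
      have dint: "int d = int k - int k' - int n * q"
      proof -
        note dmod
        moreover have "(int k - int k') div int n * int n + (int k - int k') mod int n = int k - int k'"
          by (rule div_mult_mod_eq)
        ultimately show ?thesis unfolding q_def using mult.commute[of "int n" "(int k - int k') div int n"] by linarith
      qed
      have dn: "d < n" unfolding d_def using n0 by (simp add: nat_less_iff)
      have d1: "d \<ge> 1"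
      proof (rule ccontr)
        assume "\<not> d \<ge> 1"
        then have "(int k - int k') mod int n = 0" using dmod by simp
        then have "int k mod int n = int k' mod int n" by (simp add: mod_eq_dvd_iff dvd_eq_mod_eq_0)
        then show False using kn ne by simp
      qed
      obtain i where i: "i < r" "mm n r a d = nn (th n a d i)" using mm_attained[OF r1] by blast
      have thd: "th n a d i = th n a k i - th n a k' i - of_int (q * a i)"
      proof -
        have hd: "real d = real k - real k' - real n * of_int q" using dint by (metis of_int_of_nat_eq of_int_diff of_int_mult of_int_of_nat_eq)
        show ?thesis unfolding th_def hd using n0 by (simp add: field_simps)
      qed
      have "nn (th n a d i) \<le> \<bar>th n a d i - of_int (round (th n a k i) - round (th n a k' i) - q * a i)\<bar>"
        by (rule nn_min)
      also have "\<dots> = \<bar>u k i - u k' i\<bar>" unfolding thd u_def by (simp add: algebra_simps)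
      also have "\<dots> < \<rho>" by (rule close[OF i(1)])
      finally have "mm n r a d < \<rho>" using i by simp
      with hmin d1 dn show False by force
    qed
  qed
  have "card K = card (f ` K)" using inj by (simp add: card_image)
  also have "\<dots> \<le> card P" by (rule card_mono[OF _ sub]) (simp add: P_def finite_PiE)
  also have "card P = (2*j+2)^r" proof -
    have "nat (2 + 2 * int j) = Suc (Suc (2 * j))" by simp
    then show ?thesis unfolding P_def by (simp add: card_PiE)
  qed
  finally show ?thesis unfolding K_def .
qed


lemma geo_bound: fixes q :: real
  assumes "0 \<le> q" "q \<le> 1/2" "finite J" "0 \<notin> J"
  shows "(\<Sum>j\<in>J. q^j) \<le> 2*q"
proof -
  define M where "M = Suc (Max (insert 0 J))"
  have JM: "J \<subseteq> {..<M} - {0}" using assms(3,4) unfolding M_def by (auto simp: le_imp_less_Suc)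
  have "(\<Sum>j\<in>J. q^j) \<le> (\<Sum>j\<in>{..<M} - {0}. q^j)"
    by (rule sum_mono2) (use JM assms(1) in auto)
  also have "\<dots> = (\<Sum>j<M. q^j) - 1" unfolding M_def by (subst sum_diff1) auto
  also have "(\<Sum>j<M. q^j) = (1 - q^M) / (1 - q)" using assms(2) by (simp add: sum_gp_strict)
  also have "\<dots> \<le> 1 / (1 - q)" using assms by (intro divide_right_mono) auto
  finally have "(\<Sum>j\<in>J. q^j) \<le> 1 / (1 - q) - 1" by simp
  also have "\<dots> = q / (1 - q)" using assms(2) by (simp add: field_simps)
  also have "\<dots> \<le> 2 * q" using assms mult_left_mono[of "q*2" 1 q] by (simp add: field_simps)
  finally show ?thesis .
qed

lemma poly_exp_bound: assumes "j \<ge> 1" shows "(2*real j+2)^r \<le> 4^r * exp (real r * real j)"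
proof -
  have "1 + real j \<le> exp (real j)" by (rule exp_ge_add_one_self)
  then have "2*real j+2 \<le> 4 * exp (real j)" by linarith
  then have "(2*real j+2)^r \<le> (4 * exp (real j))^r" by (intro power_mono) auto
  also have "\<dots> = 4^r * exp (real r * real j)" by (simp add: power_mult_distrib exp_of_nat_mult)
  finally show ?thesis .
qed

lemma main_decay:
  assumes r1: "r \<ge> 1" and n2: "n \<ge> 2" and irr: "rw_irreducible n r a" and rho: "\<rho> > 0"
    and hmin: "\<forall>d. 1 \<le> d \<longrightarrow> d < n \<longrightarrow> \<rho> \<le> mm n r a d"
    and xbig: "real t * \<rho>^2 / real (2*r+1) \<ge> 3*real r + 3"
  shows "rw_dist n r a t < 1/2"
proof -
  define x where "x = real t * \<rho>^2 / real (2*r+1)"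
  define K where "K = {1..<n}"
  define jj where "jj k = nat \<lfloor>mm n r a k / \<rho>\<rfloor>" for k
  have jjle: "real (jj k) * \<rho> \<le> mm n r a k" for k
  proof -
    have "0 \<le> \<lfloor>mm n r a k / \<rho>\<rfloor>" using mm_nonneg[OF r1] rho by simp
    then have "real (jj k) = of_int \<lfloor>mm n r a k / \<rho>\<rfloor>" unfolding jj_def by simp
    also have "\<dots> \<le> mm n r a k / \<rho>" by simp
    finally show ?thesis using rho by (simp add: field_simps)
  qed
  have jjgt: "mm n r a k < (real (jj k) + 1) * \<rho>" for k
  proof -
    have "0 \<le> \<lfloor>mm n r a k / \<rho>\<rfloor>" using mm_nonneg[OF r1] rho by simp
    then have "real (jj k) = of_int \<lfloor>mm n r a k / \<rho>\<rfloor>" unfolding jj_def by simp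
    moreover have "mm n r a k / \<rho> < of_int \<lfloor>mm n r a k / \<rho>\<rfloor> + 1" by linarith
    ultimately show ?thesis using rho by (simp add: field_simps)
  qed
  have jj1: "jj k \<ge> 1" if "k \<in> K" for k
  proof -
    have "\<rho> \<le> mm n r a k" using hmin that unfolding K_def by auto
    then have "1 \<le> mm n r a k / \<rho>" using rho by simp
    then have "1 \<le> \<lfloor>mm n r a k / \<rho>\<rfloor>" by (simp add: le_floor_iff)
    then show ?thesis unfolding jj_def by arith
  qed
  have termb: "\<bar>lam n r a k\<bar> ^ t \<le> exp (- x * real (jj k))" if "k \<in> K" for k
  proof -
    have "\<bar>lam n r a k\<bar> \<le> exp (- (1 - \<bar>lam n r a k\<bar>))"
      using exp_ge_add_one_self[of "- (1 - \<bar>lam n r a k\<bar>)"] by simp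
    then have "\<bar>lam n r a k\<bar> ^ t \<le> exp (- (1 - \<bar>lam n r a k\<bar>)) ^ t" by (intro power_mono) auto
    also have "\<dots> = exp (- (real t * (1 - \<bar>lam n r a k\<bar>)))" by (simp add: exp_of_nat_mult[symmetric] algebra_simps)
    also have "\<dots> \<le> exp (- x * real (jj k))"
    proof -
      have "real (jj k) * \<rho>^2 \<le> (real (jj k) * \<rho>)^2"
      proof -
        have "real (jj k) \<le> real (jj k)^2" using jj1[OF that] by (simp add: power2_eq_square)
        then show ?thesis using rho by (simp add: power_mult_distrib mult_right_mono)
      qed
      also have "\<dots> \<le> mm n r a k ^ 2" using jjle[of k] rho by (intro power_mono) auto
      finally have "real (jj k) * \<rho>^2 \<le> mm n r a k ^ 2" .
      then have "real (jj k) * \<rho>^2 / real (2*r+1) \<le> 1 - \<bar>lam n r a k\<bar>"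
        using lam_lower[OF r1, of n a k] by (smt (verit) divide_right_mono of_nat_0_le_iff)
      then have "real t * (real (jj k) * \<rho>^2 / real (2*r+1)) \<le> real t * (1 - \<bar>lam n r a k\<bar>)"
        by (intro mult_left_mono) auto
      then have "x * real (jj k) \<le> real t * (1 - \<bar>lam n r a k\<bar>)" unfolding x_def by (simp add: field_simps)
      then show ?thesis by simp
    qed
    finally show ?thesis .
  qed
  define q where "q = exp (- (x - real r))"
  have q0: "0 \<le> q" unfolding q_def by simp
  have e2: "4 \<le> exp (2::real)"
  proof -
    have "2 \<le> exp (1::real)" using exp_ge_add_one_self[of 1] by simp
    then have "2^2 \<le> exp (1::real) ^ 2" by (intro power_mono) auto
    then show ?thesis by (simp add: exp_of_nat_mult[symmetric])
  qed
  have xr: "x - real r \<ge> 2 * real r + 3" using xbig unfolding x_def by simp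
  have key: "4^(r+1) * q < 1"
  proof -
    have "(4::real)^(r+1) \<le> exp 2 ^ (r+1)" using e2 by (intro power_mono) auto
    also have "\<dots> = exp (real (r+1) * 2)" by (simp only: exp_of_nat_mult)
    also have "\<dots> = exp (2 * real r + 2)" by (simp add: algebra_simps)
    also have "\<dots> < exp (x - real r)" using xr by simp
    finally have h: "(4::real)^(r+1) < exp (x - real r)" .
    have "4^(r+1) * q = 4^(r+1) / exp (x - real r)" unfolding q_def using exp_minus[of "x - real r"] by (simp add: divide_inverse)
    also have "\<dots> < 1" using h by (simp add: divide_less_eq_1_pos)
    finally show ?thesis .
  qed
  have qhalf: "q \<le> 1/2"
  proof -
    have "(4::real) \<le> 4^(r+1)" using r1 by (simp add: self_le_power)
    then have "4 * q \<le> 4^(r+1) * q" using q0 by (rule mult_right_mono)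
    then show ?thesis using key by linarith
  qed
  have "rw_dist n r a t \<le> (\<Sum>k\<in>K. \<bar>lam n r a k\<bar> ^ t)" unfolding K_def using dist_bound n2 by simp
  also have "\<dots> \<le> (\<Sum>k\<in>K. exp (- x * real (jj k)))" by (rule sum_mono) (rule termb)
  also have "\<dots> = (\<Sum>j\<in>jj ` K. \<Sum>k\<in>{k\<in>K. jj k = j}. exp (- x * real (jj k)))"
    by (rule sum.image_gen) (simp add: K_def)
  also have "\<dots> = (\<Sum>j\<in>jj ` K. real (card {k\<in>K. jj k = j}) * exp (- x * real j))"
    by (intro sum.cong refl) simp
  also have "\<dots> \<le> (\<Sum>j\<in>jj ` K. (2*real j+2)^r * exp (- x * real j))"
  proof (rule sum_mono)
    fix j assume "j \<in> jj ` K"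
    have "{k\<in>K. jj k = j} \<subseteq> {k. k < n \<and> mm n r a k < (real j + 1) * \<rho>}"
      using jjgt unfolding K_def by auto
    then have "card {k\<in>K. jj k = j} \<le> card {k. k < n \<and> mm n r a k < (real j + 1) * \<rho>}"
      by (rule card_mono[rotated]) simp
    also have "\<dots> \<le> (2*j+2)^r" using packing[OF r1 _ rho hmin] n2 by simp
    finally have "real (card {k\<in>K. jj k = j}) \<le> (2*real j+2)^r"
      by (metis (mono_tags, lifting) of_nat_le_iff of_nat_add of_nat_mult of_nat_numeral of_nat_power)
    then show "real (card {k\<in>K. jj k = j}) * exp (- x * real j) \<le> (2*real j+2)^r * exp (- x * real j)"
      by (intro mult_right_mono) auto
  qed
  also have "\<dots> \<le> (\<Sum>j\<in>jj ` K. 4^r * q^j)"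
  proof (rule sum_mono)
    fix j assume "j \<in> jj ` K"
    then have j1: "j \<ge> 1" using jj1 by auto
    have "(2*real j+2)^r * exp (- x * real j) \<le> 4^r * exp (real r * real j) * exp (- x * real j)"
      using poly_exp_bound[OF j1, of r] by (intro mult_right_mono) auto
    also have "\<dots> = 4^r * q^j" unfolding q_def
      by (simp add: exp_of_nat_mult[symmetric] exp_add[symmetric] algebra_simps)
    finally show "(2*real j+2)^r * exp (- x * real j) \<le> 4^r * q^j" .
  qed
  also have "\<dots> = 4^r * (\<Sum>j\<in>jj ` K. q^j)" by (simp add: sum_distrib_left)
  also have "\<dots> \<le> 4^r * (2*q)"
    by (intro mult_left_mono geo_bound q0 qhalf) (use jj1 in \<open>force simp: K_def\<close>)+
  also have "\<dots> < 1/2" using key by simp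
  finally show ?thesis .
qed


lemma dist0: assumes "n \<ge> 2" shows "rw_dist n r a 0 \<ge> 1/2"
proof -
  have "\<bar>mat_pow n (rw_matrix n r a) 0 0 0 - 1 / real n\<bar> \<le> rw_dist n r a 0"
    unfolding rw_dist_def by (rule member_le_sum) (use assms in auto)
  moreover have "\<bar>mat_pow n (rw_matrix n r a) 0 0 0 - 1 / real n\<bar> = 1 - 1 / real n" using assms by simp
  moreover have "1 / real n \<le> 1/2" using assms by (simp add: field_simps)
  ultimately show ?thesis by linarith
qed

theorem mainTheorem5:
  shows "\<forall>r::nat. r \<ge> 1 \<longrightarrow> (\<exists>C::real. \<forall>(n::nat) (a::nat \<Rightarrow> int).
           real n \<ge> pi ^ r \<longrightarrow> rw_irreducible n r a \<longrightarrow>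
           (1 - rw_lambda_m n r a) * real (rw_mixing n r a (1/2)) \<le> C)"
proof (intro allI impI)
  fix r :: nat assume r1: "r \<ge> 1"
  define C where "C = 2*pi^2 * ((3*real r + 3) * real (2*r+1))"
  show "\<exists>C::real. \<forall>(n::nat) (a::nat \<Rightarrow> int).
           real n \<ge> pi ^ r \<longrightarrow> rw_irreducible n r a \<longrightarrow>
           (1 - rw_lambda_m n r a) * real (rw_mixing n r a (1/2)) \<le> C"
  proof (intro exI[of _ C] allI impI)
    fix n :: nat and a :: "nat \<Rightarrow> int"
    assume npi: "real n \<ge> pi ^ r" and irr: "rw_irreducible n r a"
    have "pi ^ 1 \<le> pi ^ r" using r1 pi_ge_two by (intro power_increasing) auto
    then have "real n \<ge> 2" using npi pi_ge_two by simp
    then have n2: "n \<ge> 2" by simp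
    then have n0: "n > 0" by simp
    define \<rho> where "\<rho> = Min (mm n r a ` {1..<n})"
    have ne: "{1..<n} \<noteq> {}" using n2 by auto
    have "\<rho> \<in> mm n r a ` {1..<n}" unfolding \<rho>_def using ne by (intro Min_in) auto
    then obtain k0 where k0: "k0 \<in> {1..<n}" "mm n r a k0 = \<rho>" by blast
    have rho: "\<rho> > 0" using mm_pos[OF r1 n2 irr] k0 by force
    have hmin: "\<forall>d. 1 \<le> d \<longrightarrow> d < n \<longrightarrow> \<rho> \<le> mm n r a d"
      unfolding \<rho>_def by (auto intro!: Min_le)
    define S where "S = {cmod \<mu> | \<mu>. is_eigenvalue n (rw_matrix n r a) \<mu> \<and> \<mu> \<noteq> 1}"
    have "S \<subseteq> (\<lambda>k. \<bar>lam n r a k\<bar>) ` {..<n}"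
    proof
      fix s assume "s \<in> S"
      then obtain \<mu> where mu: "s = cmod \<mu>" "is_eigenvalue n (rw_matrix n r a) \<mu>" unfolding S_def by blast
      obtain k where "k < n" "\<mu> = complex_of_real (lam n r a k)" using eig_complete[OF n0 mu(2)] by blast
      then show "s \<in> (\<lambda>k. \<bar>lam n r a k\<bar>) ` {..<n}" using mu(1) by auto
    qed
    then have finS: "finite S" by (rule finite_subset) simp
    have lam_lt: "lam n r a k0 < 1"
    proof -
      have "mm n r a k0 ^ 2 / real (2*r+1) > 0" using rho k0 by simp
      then show ?thesis using lam_lower[OF r1, of n a k0] by linarith
    qed
    have "\<bar>lam n r a k0\<bar> \<in> S"
    proof -
      have "is_eigenvalue n (rw_matrix n r a) (complex_of_real (lam n r a k0))"
        using eig_lam[OF n0] k0 by simp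
      moreover have "complex_of_real (lam n r a k0) \<noteq> 1" using lam_lt by (metis of_real_eq_1_iff less_irrefl)
      ultimately show ?thesis unfolding S_def by force
    qed
    then have "\<bar>lam n r a k0\<bar> \<le> Max S" using finS by (rule Max_ge[rotated])
    then have "lam n r a k0 \<le> rw_lambda_m n r a" unfolding rw_lambda_m_def S_def[symmetric] by linarith
    then have gap: "1 - rw_lambda_m n r a \<le> 2*pi^2 * \<rho>^2"
      using lam_upper[OF r1, of n a k0] k0 by simp
    define B where "B = (3*real r + 3) * real (2*r+1)"
    define T where "T = {t. rw_dist n r a t \<ge> 1/2}"
    have Tb: "real t * \<rho>^2 < B" if "t \<in> T" for t
    proof (rule ccontr)
      assume "\<not> ?thesis"
      then have "real t * \<rho>^2 / real (2*r+1) \<ge> 3*real r + 3" unfolding B_def by (simp add: field_simps)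
      from main_decay[OF r1 n2 irr rho hmin this] that show False unfolding T_def by simp
    qed
    have finT: "finite T"
    proof (rule finite_subset)
      show "T \<subseteq> {..nat \<lceil>B / \<rho>^2\<rceil>}"
      proof
        fix t assume "t \<in> T"
        then have "real t * \<rho>^2 < B" by (rule Tb)
        then have "real t \<le> B / \<rho>^2" using rho by (simp add: field_simps)
        also have "\<dots> \<le> of_int \<lceil>B / \<rho>^2\<rceil>" by simp
        finally have "int t \<le> \<lceil>B / \<rho>^2\<rceil>" by linarith
        then show "t \<in> {..nat \<lceil>B / \<rho>^2\<rceil>}" by simp
      qed
    qed simp
    have "0 \<in> T" unfolding T_def using dist0[OF n2] by simp
    then have "rw_mixing n r a (1/2) \<in> T" unfolding rw_mixing_def T_def[symmetric] using finT
      by (intro Max_in) auto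
    then have tb: "real (rw_mixing n r a (1/2)) * \<rho>^2 < B" by (rule Tb)
    have "(1 - rw_lambda_m n r a) * real (rw_mixing n r a (1/2)) \<le> 2*pi^2 * \<rho>^2 * real (rw_mixing n r a (1/2))"
      using gap by (intro mult_right_mono) auto
    also have "\<dots> = 2*pi^2 * (real (rw_mixing n r a (1/2)) * \<rho>^2)" by simp
    also have "\<dots> \<le> 2*pi^2 * B" using tb by (intro mult_left_mono) auto
    finally show "(1 - rw_lambda_m n r a) * real (rw_mixing n r a (1/2)) \<le> C" unfolding C_def B_def .
  qed
qed

end
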